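(* Consider a downlink system with $L$ transmitters, each having $M$ antennas, $K$ single-antenna data receivers and $J$ single-antenna energy receivers. For $k\in\{1,\dots,K\}$ let $\mathbf{h}_k\in\mathbb{C}^{ML\times1}$ and $\mathbf{H}_k=\mathbf{h}_k\mathbf{h}_k^H$; for $j\in\{1,\dots,J\}$ let $\mathbf{g}_j\in\mathbb{C}^{ML\times1}$ and $\mathbf{G}_j=\mathbf{g}_j\mathbf{g}_j^H$. For $l\in\{1,\dots,L\}$ let $\mathbf{A}_l$ be the $ML\times ML$ diagonal matrix with $(l-1)M$ leading zeros, then $M$ ones, then $(L-l)M$ zeros on its diagonal. Fix $\sigma^2>0$, $\eta\in(0,1)$, $Q_{\min}\ge0$, $C_l>0$, $E_l>0$, $\beta_{kl}>0$, $\hat R_k\ge 0$. Let $\mathcal{F}_0$ be the set of tuples of Hermitian matrices $(\{\mathbf{W}_k\}_{k=1}^K,\{\mathbf{V}_j\}_{j=1}^J)$ satisfying (a) $\sum_{i=1}^K\mathrm{tr}(\mathbf{G}_j\mathbf{W}_i)+\sum_{i=1}^J\mathrm{tr}(\mathbf{G}_j\mathbf{V}_i)\ge Q_{\min}/\eta$ for all $j$; (b) $\sum_{k=1}^K\beta_{kl}\,\mathrm{tr}(\mathbf{W}_k\mathbf{A}_l)\,\hat R_k\le C_l$ for all $l$; (c) $\mathbf{W}_k\succeq0$, $\mathbf{V}_j\succeq0$ for all $k,j$. Let (P4) be the problem of maximizing $$\min_{k}\frac{\mathrm{tr}(\mathbf{H}_k\mathbf{W}_k)}{\sum_{i\neq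 k}\mathrm{tr}(\mathbf{H}_k\mathbf{W}_i)+\sum_{i=1}^J\mathrm{tr}(\mathbf{H}_k\mathbf{V}_i)+\sigma^2}$$ over $\mathcal{F}_0$ subject additionally to $\sum_{k=1}^K\mathrm{tr}(\mathbf{W}_k\mathbf{A}_l)+\sum_{j=1}^J\mathrm{tr}(\mathbf{V}_j\mathbf{A}_l)\le E_l$ for all $l$, and let $\gamma_{\max}$ denote its optimal value. For $\gamma>0$, let (P5) be the problem of minimizing $$\max_{l}\frac{\sum_{k=1}^K\mathrm{tr}(\mathbf{W}_k\mathbf{A}_l)+\sum_{j=1}^J\mathrm{tr}(\mathbf{V}_j\mathbf{A}_l)}{E_l}$$ over $\mathcal{F}_0$ subject additionally to $\frac1\gamma\mathrm{tr}(\mathbf{H}_k\mathbf{W}_k)-\sum_{i\ne k}\mathrm{tr}(\mathbf{H}_k\mathbf{W}_i)-\sum_{i=1}^J\mathrm{tr}(\mathbf{H}_k\mathbf{V}_i)-\sigma^2\ge0$ for all $k$, and let $h(\gamma)$ denote its optimal value. Call $\gamma$ achievable if $\gamma\le\gamma_{\max}$. Then a common SINR target $\gamma>0$ is achievable if and only if $h(\gamma)\le 1$.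
   Context: $\mathrm{tr}$ denotes trace and $\succeq0$ positive semidefiniteness. The ratio in (P4) is the signal-to-interference-plus-noise ratio (SINR) of data receiver $k$ under the relaxed beamforming covariances $\mathbf{W}_k$ (data) and $\mathbf{V}_j$ (energy); $h(\gamma)$ is the minimum weighted peak transmit power needed to give every data receiver SINR at least $\gamma$. *)

theory Defs
  imports "Jordan_Normal_Form.Matrix" "HOL-Library.Extended_Real"
begin

definition mtrace :: "complex mat \<Rightarrow> complex" where
  "mtrace X = (\<Sum>i<dim_row X. X $$ (i,i))"

definition hermitian_mat :: "nat \<Rightarrow> complex mat \<Rightarrow> bool" where
  "hermitian_mat N W \<longleftrightarrow> W \<in> carrier_mat N N \<and>
     (\<forall>i<N. \<forall>j<N. W $$ (i,j) = cnj (W $$ (j,i)))"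

definition psd_mat :: "nat \<Rightarrow> complex mat \<Rightarrow> bool" where
  "psd_mat N W \<longleftrightarrow> hermitian_mat N W \<and>
     (\<forall>x\<in>carrier_vec N. 0 \<le> Re (\<Sum>i<N. \<Sum>j<N. cnj (x $ i) * W $$ (i,j) * x $ j))"

definition outer :: "complex vec \<Rightarrow> complex mat" where
  "outer h = mat (dim_vec h) (dim_vec h) (\<lambda>(i,j). h $ i * cnj (h $ j))"

definition selA :: "nat \<Rightarrow> nat \<Rightarrow> nat \<Rightarrow> complex mat" where
  "selA M L l = mat_diag (M * L) (\<lambda>i. if (l - 1) * M \<le> i \<and> i < l * M then 1 else 0)"

text \<open>tr(X Y) as a real number (all traces occurring are of products of Hermitian
  matrices with PSD matrices, hence real; we take the real part).\<close>
definition rtr :: "complex mat \<Rightarrow> complex mat \<Rightarrow> real" where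
  "rtr X Y = Re (mtrace (X * Y))"

definition F0 :: "nat \<Rightarrow> nat \<Rightarrow> nat \<Rightarrow> nat \<Rightarrow> (nat \<Rightarrow> complex vec) \<Rightarrow> real \<Rightarrow> real
   \<Rightarrow> (nat \<Rightarrow> real) \<Rightarrow> (nat \<Rightarrow> nat \<Rightarrow> real) \<Rightarrow> (nat \<Rightarrow> real)
   \<Rightarrow> (nat \<Rightarrow> complex mat) \<Rightarrow> (nat \<Rightarrow> complex mat) \<Rightarrow> bool" where
  "F0 M L K J g eta Qmin C beta Rhat W V \<longleftrightarrow>
     (\<forall>j\<in>{1..J}. (\<Sum>i=1..K. rtr (outer (g j)) (W i)) + (\<Sum>i=1..J. rtr (outer (g j)) (V i))
                    \<ge> Qmin / eta) \<and>
     (\<forall>l\<in>{1..L}. (\<Sum>k=1..K. beta k l * rtr (W k) (selA M L l) * Rhat k) \<le> C l) \<and>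
     (\<forall>k\<in>{1..K}. psd_mat (M * L) (W k)) \<and>
     (\<forall>j\<in>{1..J}. psd_mat (M * L) (V j))"

definition sinr :: "nat \<Rightarrow> nat \<Rightarrow> (nat \<Rightarrow> complex vec) \<Rightarrow> real
   \<Rightarrow> (nat \<Rightarrow> complex mat) \<Rightarrow> (nat \<Rightarrow> complex mat) \<Rightarrow> nat \<Rightarrow> real" where
  "sinr K J h sigma2 W V k =
     rtr (outer (h k)) (W k) /
     ((\<Sum>i\<in>{1..K}-{k}. rtr (outer (h k)) (W i)) + (\<Sum>i=1..J. rtr (outer (h k)) (V i)) + sigma2)"

definition power :: "nat \<Rightarrow> nat \<Rightarrow> nat \<Rightarrow> nat
   \<Rightarrow> (nat \<Rightarrow> complex mat) \<Rightarrow> (nat \<Rightarrow> complex mat) \<Rightarrow> nat \<Rightarrow> real" where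
  "power M L K J W V l = (\<Sum>k=1..K. rtr (W k) (selA M L l)) + (\<Sum>j=1..J. rtr (V j) (selA M L l))"

text \<open>Optimal value of (P4) (supremum; -\<infinity> if infeasible).\<close>
definition gamma_max :: "nat \<Rightarrow> nat \<Rightarrow> nat \<Rightarrow> nat \<Rightarrow> (nat \<Rightarrow> complex vec) \<Rightarrow> (nat \<Rightarrow> complex vec)
   \<Rightarrow> real \<Rightarrow> real \<Rightarrow> real \<Rightarrow> (nat \<Rightarrow> real) \<Rightarrow> (nat \<Rightarrow> real) \<Rightarrow> (nat \<Rightarrow> nat \<Rightarrow> real)
   \<Rightarrow> (nat \<Rightarrow> real) \<Rightarrow> ereal" where
  "gamma_max M L K J h g sigma2 eta Qmin C E beta Rhat =
     Sup {ereal (Min ((sinr K J h sigma2 W V) ` {1..K})) | W V.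
            F0 M L K J g eta Qmin C beta Rhat W V \<and>
            (\<forall>l\<in>{1..L}. power M L K J W V l \<le> E l)}"

text \<open>Optimal value h(gamma) of (P5) (infimum; +\<infinity> if infeasible).\<close>
definition hP5 :: "nat \<Rightarrow> nat \<Rightarrow> nat \<Rightarrow> nat \<Rightarrow> (nat \<Rightarrow> complex vec) \<Rightarrow> (nat \<Rightarrow> complex vec)
   \<Rightarrow> real \<Rightarrow> real \<Rightarrow> real \<Rightarrow> (nat \<Rightarrow> real) \<Rightarrow> (nat \<Rightarrow> real) \<Rightarrow> (nat \<Rightarrow> nat \<Rightarrow> real)
   \<Rightarrow> (nat \<Rightarrow> real) \<Rightarrow> real \<Rightarrow> ereal" where
  "hP5 M L K J h g sigma2 eta Qmin C E beta Rhat \<gamma> =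
     Inf {ereal (Max ((\<lambda>l. power M L K J W V l / E l) ` {1..L})) | W V.
            F0 M L K J g eta Qmin C beta Rhat W V \<and>
            (\<forall>k\<in>{1..K}. (1 / \<gamma>) * rtr (outer (h k)) (W k)
                 - (\<Sum>i\<in>{1..K}-{k}. rtr (outer (h k)) (W i))
                 - (\<Sum>i=1..J. rtr (outer (h k)) (V i)) - sigma2 \<ge> 0)}"

end

theory Submission
  imports Defs
begin

lemma subseq_multi:
  fixes x :: "nat \<Rightarrow> 'a \<Rightarrow> real"
  assumes "finite I" "\<forall>i\<in>I. Bseq (\<lambda>n. x n i)"
  shows "\<exists>r. strict_mono r \<and> (\<forall>i\<in>I. convergent (\<lambda>n. x (r n) i))"
  using assms
proof (induction I rule: finite_induct)
  case empty
  show ?case by (rule exI[of _ id]) (auto simp: strict_mono_def)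
next
  case (insert a I)
  then obtain r where r: "strict_mono r" "\<forall>i\<in>I. convergent (\<lambda>n. x (r n) i)" by auto
  have "Bseq (\<lambda>n. x (r n) a)" using insert.prems Bseq_subseq[of "\<lambda>n. x n a" r] by auto
  obtain s where s: "strict_mono s" "monoseq (\<lambda>n. x (r (s n)) a)"
    using seq_monosub[of "\<lambda>n. x (r n) a"] by auto
  have ca: "convergent (\<lambda>n. x (r (s n)) a)"
    using Bseq_monoseq_convergent[OF Bseq_subseq[OF \<open>Bseq (\<lambda>n. x (r n) a)\<close>] s(2)] .
  have "convergent (\<lambda>n. x (r (s n)) i)" if "i \<in> I" for i
  proof -
    from r(2) that have "(\<lambda>n. x (r n) i) \<longlonglongrightarrow> lim (\<lambda>n. x (r n) i)"
      using convergent_LIMSEQ_iff by blast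
    from LIMSEQ_subseq_LIMSEQ[OF this s(1)] show ?thesis
      by (auto simp: convergent_def o_def)
  qed
  with ca show ?case using strict_mono_o[OF r(1) s(1)]
    by (intro exI[of _ "r \<circ> s"]) (auto simp: o_def)
qed

lemma sum_two_delta:
  fixes f :: "nat \<Rightarrow> complex"
  assumes "i < N" "j < N" "i \<noteq> j"
  shows "(\<Sum>b<N. f b * (if b = i then p else if b = j then q else 0)) = f i * p + f j * q"
proof -
  have "(\<Sum>b<N. f b * (if b = i then p else if b = j then q else 0))
      = (\<Sum>b<N. (if b = i then f b * p else 0) + (if b = j then f b * q else 0))"
    using assms by (intro sum.cong) auto
  also have "\<dots> = f i * p + f j * q" using assms by (simp add: sum.distrib)
  finally show ?thesis .
qed

lemma sum_two_delta':
  fixes f :: "nat \<Rightarrow> complex"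
  assumes "i < N" "j < N" "i \<noteq> j"
  shows "(\<Sum>b<N. (if b = i then p else if b = j then q else 0) * f b) = p * f i + q * f j"
  using sum_two_delta[OF assms, of f p q] by (simp add: mult.commute)

lemma psd_diag:
  assumes "psd_mat N W" "i < N"
  shows "0 \<le> Re (W $$ (i,i))"
proof -
  have "unit_vec N i \<in> carrier_vec N" by simp
  with assms have "0 \<le> Re (\<Sum>a<N. \<Sum>b<N. cnj (unit_vec N i $ a) * W $$ (a,b) * unit_vec N i $ b)"
    unfolding psd_mat_def by blast
  also have "(\<Sum>a<N. \<Sum>b<N. cnj (unit_vec N i $ a) * W $$ (a,b) * unit_vec N i $ b)
     = (\<Sum>a<N. \<Sum>b<N. (if a = i then (if b = i then W $$ (a,b) else 0) else 0))"
    using assms(2) by (intro sum.cong refl) (auto simp: index_unit_vec)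
  also have "\<dots> = (\<Sum>a<N. if a = i then W $$ (i,i) else 0)"
    by (intro sum.cong refl) (auto)
  also have "\<dots> = W $$ (i,i)" using assms(2) by simp
  finally show ?thesis .
qed

lemma psd_diag_real:
  assumes "psd_mat N W" "i < N"
  shows "W $$ (i,i) = of_real (Re (W $$ (i,i)))"
proof -
  have "W $$ (i,i) = cnj (W $$ (i,i))" using assms unfolding psd_mat_def hermitian_mat_def by blast
  hence "Im (W $$ (i,i)) = 0" by (metis Reals_cnj_iff complex_is_Real_iff)
  thus ?thesis by (simp add: complex_eq_iff)
qed

lemma psd_entry_bound:
  assumes "psd_mat N W" "i < N" "j < N"
  shows "cmod (W $$ (i,j)) \<le> (Re (W $$ (i,i)) + Re (W $$ (j,j))) / 2"
proof (cases "i = j")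
  case True
  have "cmod (W $$ (i,i)) = Re (W $$ (i,i))"
    using psd_diag_real[OF assms(1,2)] psd_diag[OF assms(1,2)] by (metis abs_of_nonneg norm_of_real)
  then show ?thesis using True by simp
next
  case False
  define w where "w = W $$ (i,j)"
  have wji: "W $$ (j,i) = cnj w" using assms unfolding psd_mat_def hermitian_mat_def w_def by blast
  show ?thesis
  proof (cases "w = 0")
    case True
    then show ?thesis using psd_diag[OF assms(1,2)] psd_diag[OF assms(1,3)] by (simp add: w_def)
  next
    case w0: False
    define c where "c = - cnj w / of_real (cmod w)"
    define x where "x = vec N (\<lambda>a. if a = i then 1 else if a = j then c else 0)"
    have x: "x \<in> carrier_vec N" by (simp add: x_def)
    have xa: "\<And>a. a < N \<Longrightarrow> x $ a = (if a = i then 1 else if a = j then c else 0)"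
      by (simp add: x_def)
    have xc: "\<And>a. a < N \<Longrightarrow> cnj (x $ a) = (if a = i then 1 else if a = j then cnj c else 0)"
      by (simp add: xa)
    from assms x have "0 \<le> Re (\<Sum>a<N. \<Sum>b<N. cnj (x $ a) * W $$ (a,b) * x $ b)"
      unfolding psd_mat_def by blast
    also have "(\<Sum>a<N. \<Sum>b<N. cnj (x $ a) * W $$ (a,b) * x $ b)
       = (\<Sum>a<N. (if a = i then 1 else if a = j then cnj c else 0) * (\<Sum>b<N. W $$ (a,b) * (if b = i then 1 else if b = j then c else 0)))"
      by (intro sum.cong refl) (simp add: xa xc sum_distrib_left mult.assoc)
    also have "\<dots> = (\<Sum>a<N. (if a = i then 1 else if a = j then cnj c else 0) * (W $$ (a,i) + W $$ (a,j) * c))"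
      using sum_two_delta[OF assms(2,3) False] by simp
    also have "\<dots> = (W $$ (i,i) + W $$ (i,j) * c) + cnj c * (W $$ (j,i) + W $$ (j,j) * c)"
      using sum_two_delta'[OF assms(2,3) False] by simp
    also have "\<dots> = W $$ (i,i) + W $$ (j,j) * (cnj c * c) + w * c + cnj (w * c)"
      by (simp add: wji w_def algebra_simps)
    also have "w * c = - of_real (cmod w)"
      using w0 by (simp add: c_def complex_norm_square[symmetric] power2_eq_square field_simps)
    also have "cnj c * c = 1"
      using w0 by (simp add: c_def complex_norm_square[symmetric] power2_eq_square field_simps)
    finally have "0 \<le> Re (W $$ (i,i)) + Re (W $$ (j,j)) - 2 * cmod w" by simp
    then show ?thesis by (simp add: w_def)
  qed
qed

lemma mtrace_mult:
  assumes "X \<in> carrier_mat N N" "Y \<in> carrier_mat N N"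
  shows "mtrace (X * Y) = (\<Sum>i<N. \<Sum>j<N. X $$ (i,j) * Y $$ (j,i))"
  using assms unfolding mtrace_def
  by (intro sum.cong) (auto simp: scalar_prod_def atLeast0LessThan)

lemma rtr_sum:
  assumes "X \<in> carrier_mat N N" "Y \<in> carrier_mat N N"
  shows "rtr X Y = Re (\<Sum>i<N. \<Sum>j<N. X $$ (i,j) * Y $$ (j,i))"
  using mtrace_mult[OF assms] by (simp add: rtr_def)

lemma rtr_selA:
  assumes "W \<in> carrier_mat (M*L) (M*L)"
  shows "rtr W (selA M L l) = (\<Sum>i<M*L. if (l-1)*M \<le> i \<and> i < l*M then Re (W $$ (i,i)) else 0)"
proof -
  have "rtr W (selA M L l) = Re (\<Sum>i<M*L. \<Sum>j<M*L. W $$ (i,j) * selA M L l $$ (j,i))"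
    using rtr_sum[OF assms, of "selA M L l"] by (simp add: selA_def mat_diag_dim)
  also have "\<dots> = Re (\<Sum>i<M*L. W $$ (i,i) * (if (l-1)*M \<le> i \<and> i < l*M then 1 else 0))"
    by (intro arg_cong[where f=Re] sum.cong refl) (simp add: selA_def mat_diag_def if_distrib cong: if_cong)
  also have "\<dots> = (\<Sum>i<M*L. if (l-1)*M \<le> i \<and> i < l*M then Re (W $$ (i,i)) else 0)"
    by (simp add: Re_sum if_distrib cong: if_cong)
  finally show ?thesis .
qed

lemma rtr_selA_nonneg:
  assumes "psd_mat (M*L) W"
  shows "0 \<le> rtr W (selA M L l)"
proof -
  have "W \<in> carrier_mat (M*L) (M*L)" using assms by (simp add: psd_mat_def hermitian_mat_def)
  thus ?thesis using psd_diag[OF assms] by (auto simp: rtr_selA intro!: sum_nonneg)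
qed

lemma rtr_selA_ge:
  assumes "psd_mat (M*L) W" "i < M*L" "(l-1)*M \<le> i" "i < l*M"
  shows "Re (W $$ (i,i)) \<le> rtr W (selA M L l)"
proof -
  have "W \<in> carrier_mat (M*L) (M*L)" using assms by (simp add: psd_mat_def hermitian_mat_def)
  hence "rtr W (selA M L l) = (\<Sum>i<M*L. if (l-1)*M \<le> i \<and> i < l*M then Re (W $$ (i,i)) else 0)"
    by (rule rtr_selA)
  moreover have "(if (l-1)*M \<le> i \<and> i < l*M then Re (W $$ (i,i)) else 0) \<le> (\<Sum>i<M*L. if (l-1)*M \<le> i \<and> i < l*M then Re (W $$ (i,i)) else 0)"
    by (rule member_le_sum) (use assms psd_diag[OF assms(1)] in auto)
  ultimately show ?thesis using assms by simp
qed

lemma outer_carrier: "h \<in> carrier_vec N \<Longrightarrow> outer h \<in> carrier_mat N N"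
  by (simp add: outer_def)

lemma rtr_outer:
  assumes "h \<in> carrier_vec N" "W \<in> carrier_mat N N"
  shows "rtr (outer h) W = Re (\<Sum>a<N. \<Sum>b<N. cnj (h $ a) * W $$ (a,b) * h $ b)"
proof -
  have "rtr (outer h) W = Re (\<Sum>i<N. \<Sum>j<N. (h $ i * cnj (h $ j)) * W $$ (j,i))"
    using rtr_sum[OF outer_carrier[OF assms(1)] assms(2)] assms(1)
    by (simp add: outer_def)
  also have "(\<Sum>i<N. \<Sum>j<N. (h $ i * cnj (h $ j)) * W $$ (j,i)) = (\<Sum>j<N. \<Sum>i<N. (h $ i * cnj (h $ j)) * W $$ (j,i))"
    by (rule sum.swap)
  also have "\<dots> = (\<Sum>a<N. \<Sum>b<N. cnj (h $ a) * W $$ (a,b) * h $ b)"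
    by (simp add: algebra_simps)
  finally show ?thesis .
qed

lemma rtr_outer_nonneg:
  assumes "h \<in> carrier_vec N" "psd_mat N W"
  shows "0 \<le> rtr (outer h) W"
proof -
  have "W \<in> carrier_mat N N" using assms by (simp add: psd_mat_def hermitian_mat_def)
  thus ?thesis using assms rtr_outer unfolding psd_mat_def by auto
qed

lemma diag_bound:
  assumes "M \<ge> 1"
    and psdW: "\<forall>k\<in>{1..K}. psd_mat (M*L) (W k)" and psdV: "\<forall>j\<in>{1..J}. psd_mat (M*L) (V j)"
    and pw: "\<forall>l\<in>{1..L}. power M L K J W V l \<le> P l"
    and i: "i < M*L"
  shows "\<forall>k\<in>{1..K}. Re (W k $$ (i,i)) \<le> P (i div M + 1)"
    and "\<forall>j\<in>{1..J}. Re (V j $$ (i,i)) \<le> P (i div M + 1)"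
proof -
  define l where "l = i div M + 1"
  have M0: "M > 0" using assms(1) by simp
  have l1: "(l-1)*M \<le> i" "i < l*M"
  proof -
    show "(l-1)*M \<le> i" by (simp add: l_def div_times_less_eq_dividend)
    have "i = i div M * M + i mod M" by simp
    moreover have "i mod M < M" using M0 by simp
    ultimately show "i < l*M" by (simp add: l_def) (metis add.commute add_less_cancel_left div_mult_mod_eq)
  qed
  have lL: "l \<in> {1..L}" using i assms(1)
    using less_mult_imp_div_less[of i L M] by (simp add: l_def mult.commute)
  have nw: "\<forall>k\<in>{1..K}. 0 \<le> rtr (W k) (selA M L l)" using psdW rtr_selA_nonneg by blast
  have nv: "\<forall>k\<in>{1..J}. 0 \<le> rtr (V k) (selA M L l)" using psdV rtr_selA_nonneg by blast
  have s1: "0 \<le> (\<Sum>k=1..K. rtr (W k) (selA M L l))" "0 \<le> (\<Sum>k=1..J. rtr (V k) (selA M L l))"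
    using nw nv by (auto intro: sum_nonneg)
  show "\<forall>k\<in>{1..K}. Re (W k $$ (i,i)) \<le> P (i div M + 1)"
  proof
    fix k assume k: "k \<in> {1..K}"
    have "Re (W k $$ (i,i)) \<le> rtr (W k) (selA M L l)" using rtr_selA_ge psdW k i l1 by blast
    also have "\<dots> \<le> (\<Sum>k=1..K. rtr (W k) (selA M L l))" by (rule member_le_sum) (use k nw in auto)
    also have "\<dots> \<le> power M L K J W V l" using s1 by (simp add: power_def)
    also have "\<dots> \<le> P l" using pw lL by blast
    finally show "Re (W k $$ (i,i)) \<le> P (i div M + 1)" by (simp add: l_def)
  qed
  show "\<forall>k\<in>{1..J}. Re (V k $$ (i,i)) \<le> P (i div M + 1)"
  proof
    fix k assume k: "k \<in> {1..J}"
    have "Re (V k $$ (i,i)) \<le> rtr (V k) (selA M L l)" using rtr_selA_ge psdV k i l1 by blast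
    also have "\<dots> \<le> (\<Sum>k=1..J. rtr (V k) (selA M L l))" by (rule member_le_sum) (use k nv in auto)
    also have "\<dots> \<le> power M L K J W V l" using s1 by (simp add: power_def)
    also have "\<dots> \<le> P l" using pw lL by blast
    finally show "Re (V k $$ (i,i)) \<le> P (i div M + 1)" by (simp add: l_def)
  qed
qed


lemma extract_conv:
  fixes A :: "nat \<Rightarrow> 'k \<Rightarrow> complex mat"
  assumes "finite S" "\<forall>n. \<forall>k\<in>S. \<forall>i<N. \<forall>j<N. cmod (A n k $$ (i,j)) \<le> Bd i j"
  shows "\<exists>r. strict_mono r \<and> (\<forall>k\<in>S. \<forall>i<N. \<forall>j<N. convergent (\<lambda>n. A (r n) k $$ (i,j)))"
proof -
  let ?I = "S \<times> {..<N} \<times> {..<N} \<times> (UNIV::bool set)"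
  define x where "x n = (\<lambda>(k,i,j,b). if b then Re (A n k $$ (i,j)) else Im (A n k $$ (i,j)))" for n
  have "\<forall>t\<in>?I. Bseq (\<lambda>n. x n t)"
  proof
    fix t assume t: "t \<in> ?I"
    then obtain k i j b where tt: "t = (k,i,j,b)" "k \<in> S" "i < N" "j < N" by auto
    have "norm (x n t) \<le> Bd i j" for n
    proof -
      have bd: "cmod (A n k $$ (i,j)) \<le> Bd i j" using assms(2) tt by blast
      show ?thesis
      proof (cases b)
        case True
        then show ?thesis using tt bd abs_Re_le_cmod[of "A n k $$ (i,j)"] by (simp add: x_def)
      next
        case False
        then show ?thesis using tt bd abs_Im_le_cmod[of "A n k $$ (i,j)"] by (simp add: x_def)
      qed
    qed
    thus "Bseq (\<lambda>n. x n t)" by (rule BseqI')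
  qed
  then obtain r where r: "strict_mono r" "\<forall>t\<in>?I. convergent (\<lambda>n. x (r n) t)"
    using subseq_multi[of ?I x] assms(1) by auto
  have "convergent (\<lambda>n. A (r n) k $$ (i,j))" if "k \<in> S" "i < N" "j < N" for k i j
  proof -
    have "convergent (\<lambda>n. x (r n) (k,i,j,True))" "convergent (\<lambda>n. x (r n) (k,i,j,False))"
      using r(2) that by auto
    then obtain a b where ab: "(\<lambda>n. Re (A (r n) k $$ (i,j))) \<longlonglongrightarrow> a" "(\<lambda>n. Im (A (r n) k $$ (i,j))) \<longlonglongrightarrow> b"
      by (auto simp: x_def convergent_def)
    from tendsto_Complex[OF ab] show ?thesis by (auto simp: convergent_def)
  qed
  with r(1) show ?thesis by blast
qed

lemma limit_mat:
  fixes B :: "nat \<Rightarrow> complex mat"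
  assumes psd: "\<forall>n. psd_mat N (B n)"
    and conv: "\<forall>i<N. \<forall>j<N. convergent (\<lambda>n. B n $$ (i,j))"
  defines "Bl \<equiv> mat N N (\<lambda>(i,j). lim (\<lambda>n. B n $$ (i,j)))"
  shows "psd_mat N Bl"
    and "\<forall>X\<in>carrier_mat N N. (\<lambda>n. rtr X (B n)) \<longlonglongrightarrow> rtr X Bl \<and> (\<lambda>n. rtr (B n) X) \<longlonglongrightarrow> rtr Bl X"
proof -
  have car: "B n \<in> carrier_mat N N" for n using psd by (simp add: psd_mat_def hermitian_mat_def)
  have carl: "Bl \<in> carrier_mat N N" by (simp add: Bl_def)
  have ent: "(\<lambda>n. B n $$ (i,j)) \<longlonglongrightarrow> Bl $$ (i,j)" if "i < N" "j < N" for i j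
    using conv that by (simp add: Bl_def convergent_LIMSEQ_iff)
  have herm: "Bl $$ (i,j) = cnj (Bl $$ (j,i))" if "i < N" "j < N" for i j
  proof -
    have "B n $$ (i,j) = cnj (B n $$ (j,i))" for n using psd that unfolding psd_mat_def hermitian_mat_def by blast
    hence "(\<lambda>n. B n $$ (i,j)) \<longlonglongrightarrow> cnj (Bl $$ (j,i))" using tendsto_cnj[OF ent[of j i]] that by simp
    with ent[OF that] show ?thesis using LIMSEQ_unique by blast
  qed
  have qf: "0 \<le> Re (\<Sum>i<N. \<Sum>j<N. cnj (x $ i) * Bl $$ (i,j) * x $ j)" if "x \<in> carrier_vec N" for x
  proof -
    have "(\<lambda>n. Re (\<Sum>i<N. \<Sum>j<N. cnj (x $ i) * B n $$ (i,j) * x $ j)) \<longlonglongrightarrow> Re (\<Sum>i<N. \<Sum>j<N. cnj (x $ i) * Bl $$ (i,j) * x $ j)"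
    proof -
      have t: "(\<lambda>n. cnj (x $ i) * B n $$ (i,j) * x $ j) \<longlonglongrightarrow> cnj (x $ i) * Bl $$ (i,j) * x $ j"
        if "i < N" "j < N" for i j
        by (rule tendsto_mult_right, rule tendsto_mult_left, rule ent[OF that])
      show ?thesis by (intro tendsto_Re tendsto_sum) (simp add: t)
    qed
    moreover have "\<forall>n. 0 \<le> Re (\<Sum>i<N. \<Sum>j<N. cnj (x $ i) * B n $$ (i,j) * x $ j)"
      using psd that by (simp add: psd_mat_def)
    ultimately show ?thesis using LIMSEQ_le_const by blast
  qed
  show "psd_mat N Bl" using carl herm qf unfolding psd_mat_def hermitian_mat_def by blast
  show "\<forall>X\<in>carrier_mat N N. (\<lambda>n. rtr X (B n)) \<longlonglongrightarrow> rtr X Bl \<and> (\<lambda>n. rtr (B n) X) \<longlonglongrightarrow> rtr Bl X"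
  proof
    fix X :: "complex mat" assume X: "X \<in> carrier_mat N N"
    have "(\<lambda>n. Re (\<Sum>i<N. \<Sum>j<N. X $$ (i,j) * B n $$ (j,i))) \<longlonglongrightarrow> Re (\<Sum>i<N. \<Sum>j<N. X $$ (i,j) * Bl $$ (j,i))"
    proof -
      have t: "(\<lambda>n. X $$ (i,j) * B n $$ (j,i)) \<longlonglongrightarrow> X $$ (i,j) * Bl $$ (j,i)"
        if "i < N" "j < N" for i j
        by (rule tendsto_mult_left, rule ent[OF that(2,1)])
      show ?thesis by (intro tendsto_Re tendsto_sum) (simp add: t)
    qed
    moreover have "(\<lambda>n. Re (\<Sum>i<N. \<Sum>j<N. B n $$ (i,j) * X $$ (j,i))) \<longlonglongrightarrow> Re (\<Sum>i<N. \<Sum>j<N. Bl $$ (i,j) * X $$ (j,i))"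
    proof -
      have t: "(\<lambda>n. B n $$ (i,j) * X $$ (j,i)) \<longlonglongrightarrow> Bl $$ (i,j) * X $$ (j,i)"
        if "i < N" "j < N" for i j
        by (rule tendsto_mult_right, rule ent[OF that])
      show ?thesis by (intro tendsto_Re tendsto_sum) (simp add: t)
    qed
    ultimately show "(\<lambda>n. rtr X (B n)) \<longlonglongrightarrow> rtr X Bl \<and> (\<lambda>n. rtr (B n) X) \<longlonglongrightarrow> rtr Bl X"
      using rtr_sum[OF X car] rtr_sum[OF car X] rtr_sum[OF X carl] rtr_sum[OF carl X] by simp
  qed
qed

lemma conv_subseq:
  fixes X :: "nat \<Rightarrow> complex"
  assumes "convergent X" "strict_mono s"
  shows "convergent (\<lambda>n. X (s n))"
proof -
  from assms(1) have "X \<longlonglongrightarrow> lim X" by (simp add: convergent_LIMSEQ_iff)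
  from LIMSEQ_subseq_LIMSEQ[OF this assms(2)] show ?thesis by (auto simp: convergent_def o_def)
qed

lemma limit_exists:
  fixes Ws Vs :: "nat \<Rightarrow> nat \<Rightarrow> complex mat"
  assumes M1: "M \<ge> 1"
    and psdW: "\<forall>n. \<forall>k\<in>{1..K}. psd_mat (M*L) (Ws n k)"
    and psdV: "\<forall>n. \<forall>j\<in>{1..J}. psd_mat (M*L) (Vs n j)"
    and pw: "\<forall>n. \<forall>l\<in>{1..L}. power M L K J (Ws n) (Vs n) l \<le> P l"
  shows "\<exists>r W V. strict_mono r \<and> (\<forall>k\<in>{1..K}. psd_mat (M*L) (W k)) \<and> (\<forall>j\<in>{1..J}. psd_mat (M*L) (V j)) \<and>
     (\<forall>k\<in>{1..K}. \<forall>X\<in>carrier_mat (M*L) (M*L). (\<lambda>n. rtr X (Ws (r n) k)) \<longlonglongrightarrow> rtr X (W k) \<and> (\<lambda>n. rtr (Ws (r n) k) X) \<longlonglongrightarrow> rtr (W k) X) \<and>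
     (\<forall>j\<in>{1..J}. \<forall>X\<in>carrier_mat (M*L) (M*L). (\<lambda>n. rtr X (Vs (r n) j)) \<longlonglongrightarrow> rtr X (V j) \<and> (\<lambda>n. rtr (Vs (r n) j) X) \<longlonglongrightarrow> rtr (V j) X)"
proof -
  define N where "N = M * L"
  define Bd where "Bd i j = (P (i div M + 1) + P (j div M + 1)) / 2" for i j
  have bW: "\<forall>n. \<forall>k\<in>{1..K}. \<forall>i<N. \<forall>j<N. cmod (Ws n k $$ (i,j)) \<le> Bd i j"
  proof (intro allI ballI impI)
    fix n k i j assume k: "k \<in> {1..K}" and ij: "i < N" "j < N"
    have "Re (Ws n k $$ (i,i)) \<le> P (i div M + 1)" "Re (Ws n k $$ (j,j)) \<le> P (j div M + 1)"
      using diag_bound(1)[OF M1 spec[OF psdW, of n] spec[OF psdV, of n] spec[OF pw, of n]] k ij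
      by (auto simp: N_def)
    moreover have "cmod (Ws n k $$ (i,j)) \<le> (Re (Ws n k $$ (i,i)) + Re (Ws n k $$ (j,j))) / 2"
      using psd_entry_bound[of N "Ws n k" i j] spec[OF psdW, of n] k ij by (simp add: N_def)
    ultimately show "cmod (Ws n k $$ (i,j)) \<le> Bd i j" by (simp add: Bd_def)
  qed
  have bV: "\<forall>n. \<forall>k\<in>{1..J}. \<forall>i<N. \<forall>j<N. cmod (Vs n k $$ (i,j)) \<le> Bd i j"
  proof (intro allI ballI impI)
    fix n k i j assume k: "k \<in> {1..J}" and ij: "i < N" "j < N"
    have "Re (Vs n k $$ (i,i)) \<le> P (i div M + 1)" "Re (Vs n k $$ (j,j)) \<le> P (j div M + 1)"
      using diag_bound(2)[OF M1 spec[OF psdW, of n] spec[OF psdV, of n] spec[OF pw, of n]] k ij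
      by (auto simp: N_def)
    moreover have "cmod (Vs n k $$ (i,j)) \<le> (Re (Vs n k $$ (i,i)) + Re (Vs n k $$ (j,j))) / 2"
      using psd_entry_bound[of N "Vs n k" i j] spec[OF psdV, of n] k ij by (simp add: N_def)
    ultimately show "cmod (Vs n k $$ (i,j)) \<le> Bd i j" by (simp add: Bd_def)
  qed
  obtain r1 where r1: "strict_mono r1" "\<forall>k\<in>{1..K}. \<forall>i<N. \<forall>j<N. convergent (\<lambda>n. Ws (r1 n) k $$ (i,j))"
    using extract_conv[of "{1..K}" N Ws Bd] bW by auto
  have bV': "\<forall>n. \<forall>k\<in>{1..J}. \<forall>i<N. \<forall>j<N. cmod (Vs (r1 n) k $$ (i,j)) \<le> Bd i j" using bV by blast
  obtain r2 where r2: "strict_mono r2" "\<forall>k\<in>{1..J}. \<forall>i<N. \<forall>j<N. convergent (\<lambda>n. Vs (r1 (r2 n)) k $$ (i,j))"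
    using extract_conv[of "{1..J}" N "\<lambda>n. Vs (r1 n)" Bd, OF _ bV'] by auto
  define r where "r = r1 \<circ> r2"
  have r: "strict_mono r" using strict_mono_o[OF r1(1) r2(1)] by (simp add: r_def)
  have cW: "\<forall>k\<in>{1..K}. \<forall>i<N. \<forall>j<N. convergent (\<lambda>n. Ws (r n) k $$ (i,j))"
  proof (intro ballI allI impI)
    fix k i j assume "k \<in> {1..K}" "i < N" "j < N"
    hence "convergent (\<lambda>n. Ws (r1 n) k $$ (i,j))" using r1(2) by blast
    from conv_subseq[OF this r2(1)] show "convergent (\<lambda>n. Ws (r n) k $$ (i,j))" by (simp add: r_def)
  qed
  have cV: "\<forall>k\<in>{1..J}. \<forall>i<N. \<forall>j<N. convergent (\<lambda>n. Vs (r n) k $$ (i,j))"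
    using r2(2) by (simp add: r_def)
  define W where "W k = mat N N (\<lambda>(i,j). lim (\<lambda>n. Ws (r n) k $$ (i,j)))" for k
  define V where "V k = mat N N (\<lambda>(i,j). lim (\<lambda>n. Vs (r n) k $$ (i,j)))" for k
  have LW: "psd_mat N (W k) \<and> (\<forall>X\<in>carrier_mat N N. (\<lambda>n. rtr X (Ws (r n) k)) \<longlonglongrightarrow> rtr X (W k) \<and> (\<lambda>n. rtr (Ws (r n) k) X) \<longlonglongrightarrow> rtr (W k) X)"
    if k: "k \<in> {1..K}" for k
    using limit_mat[of N "\<lambda>n. Ws (r n) k"] psdW cW k by (simp add: W_def N_def)
  have LV: "psd_mat N (V k) \<and> (\<forall>X\<in>carrier_mat N N. (\<lambda>n. rtr X (Vs (r n) k)) \<longlonglongrightarrow> rtr X (V k) \<and> (\<lambda>n. rtr (Vs (r n) k) X) \<longlonglongrightarrow> rtr (V k) X)"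
    if k: "k \<in> {1..J}" for k
    using limit_mat[of N "\<lambda>n. Vs (r n) k"] psdV cV k by (simp add: V_def N_def)
  show ?thesis
    by (rule exI[of _ r], rule exI[of _ W], rule exI[of _ V]) (use r LW LV in \<open>simp add: N_def\<close>)
qed

lemma seq_limits:
  fixes Ws Vs :: "nat \<Rightarrow> nat \<Rightarrow> complex mat" and W V :: "nat \<Rightarrow> complex mat"
  assumes cW: "\<forall>k\<in>{1..K}. \<forall>X\<in>carrier_mat (M*L) (M*L). (\<lambda>n. rtr X (Ws n k)) \<longlonglongrightarrow> rtr X (W k) \<and> (\<lambda>n. rtr (Ws n k) X) \<longlonglongrightarrow> rtr (W k) X"
    and cV: "\<forall>j\<in>{1..J}. \<forall>X\<in>carrier_mat (M*L) (M*L). (\<lambda>n. rtr X (Vs n j)) \<longlonglongrightarrow> rtr X (V j) \<and> (\<lambda>n. rtr (Vs n j) X) \<longlonglongrightarrow> rtr (V j) X"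
    and hc: "\<forall>k\<in>{1..K}. h k \<in> carrier_vec (M * L)"
    and gc: "\<forall>j\<in>{1..J}. g j \<in> carrier_vec (M * L)"
  shows "\<forall>l. (\<lambda>n. power M L K J (Ws n) (Vs n) l) \<longlonglongrightarrow> power M L K J W V l"
    and "\<forall>k\<in>{1..K}. (\<lambda>n. rtr (outer (h k)) (Ws n k)) \<longlonglongrightarrow> rtr (outer (h k)) (W k)"
    and "\<forall>k\<in>{1..K}. (\<lambda>n. (\<Sum>i\<in>{1..K}-{k}. rtr (outer (h k)) (Ws n i)) + (\<Sum>i=1..J. rtr (outer (h k)) (Vs n i)) + sigma2)
            \<longlonglongrightarrow> (\<Sum>i\<in>{1..K}-{k}. rtr (outer (h k)) (W i)) + (\<Sum>i=1..J. rtr (outer (h k)) (V i)) + sigma2"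
    and "(\<forall>n. F0 M L K J g eta Qmin C beta Rhat (Ws n) (Vs n)) \<Longrightarrow> (\<forall>k\<in>{1..K}. psd_mat (M*L) (W k))
          \<Longrightarrow> (\<forall>j\<in>{1..J}. psd_mat (M*L) (V j)) \<Longrightarrow> F0 M L K J g eta Qmin C beta Rhat W V"
proof -
  have sc: "selA M L l \<in> carrier_mat (M*L) (M*L)" for l by (simp add: selA_def mat_diag_dim)
  have hc': "outer (h k) \<in> carrier_mat (M*L) (M*L)" if "k \<in> {1..K}" for k using hc that outer_carrier by blast
  have gc': "outer (g j) \<in> carrier_mat (M*L) (M*L)" if "j \<in> {1..J}" for j using gc that outer_carrier by blast
  show "\<forall>l. (\<lambda>n. power M L K J (Ws n) (Vs n) l) \<longlonglongrightarrow> power M L K J W V l"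
  proof
    fix l
    show "(\<lambda>n. power M L K J (Ws n) (Vs n) l) \<longlonglongrightarrow> power M L K J W V l"
      unfolding power_def
      by (intro tendsto_add tendsto_sum) (use cW cV sc in auto)
  qed
  show "\<forall>k\<in>{1..K}. (\<lambda>n. rtr (outer (h k)) (Ws n k)) \<longlonglongrightarrow> rtr (outer (h k)) (W k)"
    using cW hc' by blast
  show "\<forall>k\<in>{1..K}. (\<lambda>n. (\<Sum>i\<in>{1..K}-{k}. rtr (outer (h k)) (Ws n i)) + (\<Sum>i=1..J. rtr (outer (h k)) (Vs n i)) + sigma2)
            \<longlonglongrightarrow> (\<Sum>i\<in>{1..K}-{k}. rtr (outer (h k)) (W i)) + (\<Sum>i=1..J. rtr (outer (h k)) (V i)) + sigma2"
  proof
    fix k assume k: "k \<in> {1..K}"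
    show "(\<lambda>n. (\<Sum>i\<in>{1..K}-{k}. rtr (outer (h k)) (Ws n i)) + (\<Sum>i=1..J. rtr (outer (h k)) (Vs n i)) + sigma2)
            \<longlonglongrightarrow> (\<Sum>i\<in>{1..K}-{k}. rtr (outer (h k)) (W i)) + (\<Sum>i=1..J. rtr (outer (h k)) (V i)) + sigma2"
      by (intro tendsto_add tendsto_sum tendsto_const) (use cW cV hc'[OF k] in auto)
  qed
  assume F: "\<forall>n. F0 M L K J g eta Qmin C beta Rhat (Ws n) (Vs n)"
    and pW: "\<forall>k\<in>{1..K}. psd_mat (M*L) (W k)" and pV: "\<forall>j\<in>{1..J}. psd_mat (M*L) (V j)"
  have a: "(\<Sum>i=1..K. rtr (outer (g j)) (W i)) + (\<Sum>i=1..J. rtr (outer (g j)) (V i)) \<ge> Qmin / eta"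
    if j: "j \<in> {1..J}" for j
  proof -
    have "(\<lambda>n. (\<Sum>i=1..K. rtr (outer (g j)) (Ws n i)) + (\<Sum>i=1..J. rtr (outer (g j)) (Vs n i)))
       \<longlonglongrightarrow> (\<Sum>i=1..K. rtr (outer (g j)) (W i)) + (\<Sum>i=1..J. rtr (outer (g j)) (V i))"
      by (intro tendsto_add tendsto_sum) (use cW cV gc'[OF j] in auto)
    moreover have "\<forall>n. Qmin / eta \<le> (\<Sum>i=1..K. rtr (outer (g j)) (Ws n i)) + (\<Sum>i=1..J. rtr (outer (g j)) (Vs n i))"
      using F j unfolding F0_def by blast
    ultimately show ?thesis using LIMSEQ_le_const by blast
  qed
  have b: "(\<Sum>k=1..K. beta k l * rtr (W k) (selA M L l) * Rhat k) \<le> C l" if l: "l \<in> {1..L}" for l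
  proof -
    have "(\<lambda>n. (\<Sum>k=1..K. beta k l * rtr (Ws n k) (selA M L l) * Rhat k))
       \<longlonglongrightarrow> (\<Sum>k=1..K. beta k l * rtr (W k) (selA M L l) * Rhat k)"
      by (intro tendsto_sum tendsto_mult_right tendsto_mult_left) (use cW sc in auto)
    moreover have "\<forall>n. (\<Sum>k=1..K. beta k l * rtr (Ws n k) (selA M L l) * Rhat k) \<le> C l"
      using F l unfolding F0_def by blast
    ultimately show ?thesis using LIMSEQ_le_const2 by blast
  qed
  show "F0 M L K J g eta Qmin C beta Rhat W V" unfolding F0_def using a b pW pV by blast
qed

lemma den_pos:
  assumes "\<forall>k\<in>{1..K}. h k \<in> carrier_vec (M * L)" "k \<in> {1..K}" "sigma2 > 0"
    and "\<forall>k\<in>{1..K}. psd_mat (M*L) (W k)" "\<forall>j\<in>{1..J}. psd_mat (M*L) (V j)"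
  shows "sigma2 \<le> (\<Sum>i\<in>{1..K}-{k}. rtr (outer (h k)) (W i)) + (\<Sum>i=1..J. rtr (outer (h k)) (V i)) + sigma2"
proof -
  have hk: "h k \<in> carrier_vec (M*L)" using assms by blast
  have "0 \<le> (\<Sum>i\<in>{1..K}-{k}. rtr (outer (h k)) (W i))"
    by (rule sum_nonneg) (use rtr_outer_nonneg[OF hk] assms(4) in auto)
  moreover have "0 \<le> (\<Sum>i=1..J. rtr (outer (h k)) (V i))"
    by (rule sum_nonneg) (use rtr_outer_nonneg[OF hk] assms(5) in auto)
  ultimately show ?thesis by simp
qed

theorem lemma2:
  fixes M L K J :: nat
    and h g :: "nat \<Rightarrow> complex vec"
    and sigma2 eta Qmin \<gamma> :: real
    and C E Rhat :: "nat \<Rightarrow> real"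
    and beta :: "nat \<Rightarrow> nat \<Rightarrow> real"
  assumes "M \<ge> 1" "L \<ge> 1" "K \<ge> 1" "J \<ge> 1"
    and "\<forall>k\<in>{1..K}. h k \<in> carrier_vec (M * L)"
    and "\<forall>j\<in>{1..J}. g j \<in> carrier_vec (M * L)"
    and "sigma2 > 0" "0 < eta" "eta < 1" "Qmin \<ge> 0"
    and "\<forall>l\<in>{1..L}. C l > 0" "\<forall>l\<in>{1..L}. E l > 0"
    and "\<forall>k\<in>{1..K}. \<forall>l\<in>{1..L}. beta k l > 0"
    and "\<forall>k\<in>{1..K}. Rhat k \<ge> 0"
    and "\<gamma> > 0"
  shows "ereal \<gamma> \<le> gamma_max M L K J h g sigma2 eta Qmin C E beta Rhat
         \<longleftrightarrow> hP5 M L K J h g sigma2 eta Qmin C E beta Rhat \<gamma> \<le> 1"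
proof -
  note M1 = assms(1) and hc = assms(5) and gc = assms(6) and sig = assms(7) and Epos = assms(12)
    and gam = assms(15)
  define eps where "eps n = inverse (real (Suc n))" for n
  have eps_pos: "eps n > 0" for n by (simp add: eps_def)
  have eps_lim: "(\<lambda>n. eps (r n)) \<longlonglongrightarrow> 0" if "strict_mono r" for r
    using LIMSEQ_subseq_LIMSEQ[OF LIMSEQ_inverse_real_of_nat that] by (simp add: eps_def o_def)
  have eps_le1: "eps n \<le> 1" for n by (simp add: eps_def inverse_le_1_iff)
  define num where "num W k = rtr (outer (h k)) (W k)" for W :: "nat \<Rightarrow> complex mat" and k
  define den where "den W V k = (\<Sum>i\<in>{1..K}-{k}. rtr (outer (h k)) (W i)) + (\<Sum>i=1..J. rtr (outer (h k)) (V i)) + sigma2"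
    for W V :: "nat \<Rightarrow> complex mat" and k
  have finK: "finite {1..K}" "{1..K} \<noteq> {}" using assms(3) by auto
  have finL: "finite {1..L}" "{1..L} \<noteq> {}" using assms(2) by auto
  show ?thesis
  proof
    assume A: "ereal \<gamma> \<le> gamma_max M L K J h g sigma2 eta Qmin C E beta Rhat"
    have "\<forall>n. \<exists>WV. F0 M L K J g eta Qmin C beta Rhat (fst WV) (snd WV) \<and>
            (\<forall>l\<in>{1..L}. power M L K J (fst WV) (snd WV) l \<le> E l) \<and>
            (\<forall>k\<in>{1..K}. \<gamma> - eps n < sinr K J h sigma2 (fst WV) (snd WV) k)"
    proof
      fix n
      have "ereal (\<gamma> - eps n) < gamma_max M L K J h g sigma2 eta Qmin C E beta Rhat"
      proof -
        have "ereal (\<gamma> - eps n) < ereal \<gamma>" using eps_pos[of n] by simp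
        thus ?thesis using A by (rule less_le_trans)
      qed
      then obtain x where x: "x \<in> {ereal (Min ((sinr K J h sigma2 W V) ` {1..K})) | W V.
            F0 M L K J g eta Qmin C beta Rhat W V \<and> (\<forall>l\<in>{1..L}. power M L K J W V l \<le> E l)}"
        "ereal (\<gamma> - eps n) < x"
        unfolding gamma_max_def less_Sup_iff by blast
      then obtain W V where WV: "x = ereal (Min ((sinr K J h sigma2 W V) ` {1..K}))"
        "F0 M L K J g eta Qmin C beta Rhat W V" "\<forall>l\<in>{1..L}. power M L K J W V l \<le> E l" by blast
      have "\<gamma> - eps n < Min ((sinr K J h sigma2 W V) ` {1..K})" using x(2) WV(1) by simp
      hence "\<forall>k\<in>{1..K}. \<gamma> - eps n < sinr K J h sigma2 W V k" using finK by simp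
      thus "\<exists>WV. F0 M L K J g eta Qmin C beta Rhat (fst WV) (snd WV) \<and>
            (\<forall>l\<in>{1..L}. power M L K J (fst WV) (snd WV) l \<le> E l) \<and>
            (\<forall>k\<in>{1..K}. \<gamma> - eps n < sinr K J h sigma2 (fst WV) (snd WV) k)"
        using WV by (intro exI[of _ "(W,V)"]) auto
    qed
    then obtain f where f: "\<forall>n. F0 M L K J g eta Qmin C beta Rhat (fst (f n)) (snd (f n)) \<and>
            (\<forall>l\<in>{1..L}. power M L K J (fst (f n)) (snd (f n)) l \<le> E l) \<and>
            (\<forall>k\<in>{1..K}. \<gamma> - eps n < sinr K J h sigma2 (fst (f n)) (snd (f n)) k)"
      by metis
    define Ws where "Ws n = fst (f n)" for n
    define Vs where "Vs n = snd (f n)" for n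
    have F: "\<forall>n. F0 M L K J g eta Qmin C beta Rhat (Ws n) (Vs n)" using f by (simp add: Ws_def Vs_def)
    have pw: "\<forall>n. \<forall>l\<in>{1..L}. power M L K J (Ws n) (Vs n) l \<le> E l" using f by (simp add: Ws_def Vs_def)
    have sn: "\<forall>n. \<forall>k\<in>{1..K}. \<gamma> - eps n < sinr K J h sigma2 (Ws n) (Vs n) k" using f by (simp add: Ws_def Vs_def)
    have psdW: "\<forall>n. \<forall>k\<in>{1..K}. psd_mat (M*L) (Ws n k)" and psdV: "\<forall>n. \<forall>j\<in>{1..J}. psd_mat (M*L) (Vs n j)"
      using F unfolding F0_def by blast+
    obtain r W V where L: "strict_mono r" "\<forall>k\<in>{1..K}. psd_mat (M*L) (W k)" "\<forall>j\<in>{1..J}. psd_mat (M*L) (V j)"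
     "\<forall>k\<in>{1..K}. \<forall>X\<in>carrier_mat (M*L) (M*L). (\<lambda>n. rtr X (Ws (r n) k)) \<longlonglongrightarrow> rtr X (W k) \<and> (\<lambda>n. rtr (Ws (r n) k) X) \<longlonglongrightarrow> rtr (W k) X"
     "\<forall>j\<in>{1..J}. \<forall>X\<in>carrier_mat (M*L) (M*L). (\<lambda>n. rtr X (Vs (r n) j)) \<longlonglongrightarrow> rtr X (V j) \<and> (\<lambda>n. rtr (Vs (r n) j) X) \<longlonglongrightarrow> rtr (V j) X"
      using limit_exists[OF M1 psdW psdV pw] by blast
    note SL = seq_limits[of K M L "\<lambda>n. Ws (r n)" W J "\<lambda>n. Vs (r n)" V h g, OF L(4) L(5) hc gc]
    have F0l: "F0 M L K J g eta Qmin C beta Rhat W V" using SL(4) F L(2,3) by blast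
    have pwl: "\<forall>l\<in>{1..L}. power M L K J W V l \<le> E l"
    proof
      fix l assume l: "l \<in> {1..L}"
      show "power M L K J W V l \<le> E l"
        using LIMSEQ_le_const2[OF spec[OF SL(1), of l]] pw l by blast
    qed
    have cons: "(1 / \<gamma>) * rtr (outer (h k)) (W k)
                 - (\<Sum>i\<in>{1..K}-{k}. rtr (outer (h k)) (W i))
                 - (\<Sum>i=1..J. rtr (outer (h k)) (V i)) - sigma2 \<ge> 0" if k: "k \<in> {1..K}" for k
    proof -
      have numc: "(\<lambda>n. num (Ws (r n)) k) \<longlonglongrightarrow> num W k" using SL(2) k by (simp add: num_def)
      have denc: "(\<lambda>n. den (Ws (r n)) (Vs (r n)) k) \<longlonglongrightarrow> den W V k" using SL(3) k by (simp add: den_def)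
      have lhs: "(\<lambda>n. (\<gamma> - eps (r n)) * den (Ws (r n)) (Vs (r n)) k) \<longlonglongrightarrow> (\<gamma> - 0) * den W V k"
        by (intro tendsto_mult tendsto_diff tendsto_const eps_lim L(1) denc)
      have "\<forall>n. (\<gamma> - eps (r n)) * den (Ws (r n)) (Vs (r n)) k \<le> num (Ws (r n)) k"
      proof
        fix n
        have dp: "den (Ws (r n)) (Vs (r n)) k > 0"
          using den_pos[OF hc k sig, of "Ws (r n)" J "Vs (r n)"] psdW psdV sig by (simp add: den_def)
        have "\<gamma> - eps (r n) < num (Ws (r n)) k / den (Ws (r n)) (Vs (r n)) k"
          using sn k by (simp add: sinr_def num_def den_def)
        thus "(\<gamma> - eps (r n)) * den (Ws (r n)) (Vs (r n)) k \<le> num (Ws (r n)) k"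
          using dp by (simp add: less_divide_eq)
      qed
      hence "\<gamma> * den W V k \<le> num W k" using LIMSEQ_le[OF lhs numc] by simp
      hence "den W V k \<le> (1/\<gamma>) * num W k" using gam by (simp add: field_simps)
      thus ?thesis by (simp add: num_def den_def)
    qed
    have mx: "Max ((\<lambda>l. power M L K J W V l / E l) ` {1..L}) \<le> 1"
      using finL pwl Epos by simp
    have "hP5 M L K J h g sigma2 eta Qmin C E beta Rhat \<gamma> \<le> ereal (Max ((\<lambda>l. power M L K J W V l / E l) ` {1..L}))"
      unfolding hP5_def by (rule Inf_lower) (use F0l cons in blast)
    also have "\<dots> \<le> 1" using mx by simp
    finally show "hP5 M L K J h g sigma2 eta Qmin C E beta Rhat \<gamma> \<le> 1" .
  next
    assume A: "hP5 M L K J h g sigma2 eta Qmin C E beta Rhat \<gamma> \<le> 1"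
    have "\<forall>n. \<exists>WV. F0 M L K J g eta Qmin C beta Rhat (fst WV) (snd WV) \<and>
            (\<forall>k\<in>{1..K}. (1 / \<gamma>) * rtr (outer (h k)) (fst WV k)
                 - (\<Sum>i\<in>{1..K}-{k}. rtr (outer (h k)) (fst WV i))
                 - (\<Sum>i=1..J. rtr (outer (h k)) (snd WV i)) - sigma2 \<ge> 0) \<and>
            (\<forall>l\<in>{1..L}. power M L K J (fst WV) (snd WV) l \<le> (1 + eps n) * E l)"
    proof
      fix n
      have "hP5 M L K J h g sigma2 eta Qmin C E beta Rhat \<gamma> < ereal (1 + eps n)"
      proof -
        have "ereal 1 < ereal (1 + eps n)" using eps_pos[of n] by simp
        thus ?thesis using A by (simp add: le_less_trans)
      qed
      then obtain x where x: "x \<in> {ereal (Max ((\<lambda>l. power M L K J W V l / E l) ` {1..L})) | W V.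
            F0 M L K J g eta Qmin C beta Rhat W V \<and>
            (\<forall>k\<in>{1..K}. (1 / \<gamma>) * rtr (outer (h k)) (W k)
                 - (\<Sum>i\<in>{1..K}-{k}. rtr (outer (h k)) (W i))
                 - (\<Sum>i=1..J. rtr (outer (h k)) (V i)) - sigma2 \<ge> 0)}"
        "x < ereal (1 + eps n)"
        unfolding hP5_def Inf_less_iff by blast
      then obtain W V where WV: "x = ereal (Max ((\<lambda>l. power M L K J W V l / E l) ` {1..L}))"
        "F0 M L K J g eta Qmin C beta Rhat W V"
        "\<forall>k\<in>{1..K}. (1 / \<gamma>) * rtr (outer (h k)) (W k)
                 - (\<Sum>i\<in>{1..K}-{k}. rtr (outer (h k)) (W i))
                 - (\<Sum>i=1..J. rtr (outer (h k)) (V i)) - sigma2 \<ge> 0" by blast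
      have "Max ((\<lambda>l. power M L K J W V l / E l) ` {1..L}) < 1 + eps n" using x(2) WV(1) by simp
      hence "\<forall>l\<in>{1..L}. power M L K J W V l / E l < 1 + eps n" using finL by simp
      hence "\<forall>l\<in>{1..L}. power M L K J W V l \<le> (1 + eps n) * E l" using Epos
        by (auto simp: divide_less_eq less_imp_le)
      thus "\<exists>WV. F0 M L K J g eta Qmin C beta Rhat (fst WV) (snd WV) \<and>
            (\<forall>k\<in>{1..K}. (1 / \<gamma>) * rtr (outer (h k)) (fst WV k)
                 - (\<Sum>i\<in>{1..K}-{k}. rtr (outer (h k)) (fst WV i))
                 - (\<Sum>i=1..J. rtr (outer (h k)) (snd WV i)) - sigma2 \<ge> 0) \<and>
            (\<forall>l\<in>{1..L}. power M L K J (fst WV) (snd WV) l \<le> (1 + eps n) * E l)"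
        using WV by (intro exI[of _ "(W,V)"]) auto
    qed
    then obtain f where f: "\<forall>n. F0 M L K J g eta Qmin C beta Rhat (fst (f n)) (snd (f n)) \<and>
            (\<forall>k\<in>{1..K}. (1 / \<gamma>) * rtr (outer (h k)) (fst (f n) k)
                 - (\<Sum>i\<in>{1..K}-{k}. rtr (outer (h k)) (fst (f n) i))
                 - (\<Sum>i=1..J. rtr (outer (h k)) (snd (f n) i)) - sigma2 \<ge> 0) \<and>
            (\<forall>l\<in>{1..L}. power M L K J (fst (f n)) (snd (f n)) l \<le> (1 + eps n) * E l)"
      by metis
    define Ws where "Ws n = fst (f n)" for n
    define Vs where "Vs n = snd (f n)" for n
    have F: "\<forall>n. F0 M L K J g eta Qmin C beta Rhat (Ws n) (Vs n)" using f by (simp add: Ws_def Vs_def)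
    have pw: "\<forall>n. \<forall>l\<in>{1..L}. power M L K J (Ws n) (Vs n) l \<le> (1 + eps n) * E l"
      using f by (simp add: Ws_def Vs_def)
    have pw2: "\<forall>n. \<forall>l\<in>{1..L}. power M L K J (Ws n) (Vs n) l \<le> 2 * E l"
    proof (intro allI ballI)
      fix n l assume l: "l \<in> {1..L}"
      have "0 < E l" using Epos l by blast
      hence "(1 + eps n) * E l \<le> 2 * E l" using eps_le1[of n] by (intro mult_right_mono) auto
      thus "power M L K J (Ws n) (Vs n) l \<le> 2 * E l" using pw l by (meson order_trans)
    qed
    have cn: "\<forall>n. \<forall>k\<in>{1..K}. (1 / \<gamma>) * num (Ws n) k - den (Ws n) (Vs n) k \<ge> 0"
      using f by (simp add: Ws_def Vs_def num_def den_def algebra_simps)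
    have psdW: "\<forall>n. \<forall>k\<in>{1..K}. psd_mat (M*L) (Ws n k)" and psdV: "\<forall>n. \<forall>j\<in>{1..J}. psd_mat (M*L) (Vs n j)"
      using F unfolding F0_def by blast+
    obtain r W V where L: "strict_mono r" "\<forall>k\<in>{1..K}. psd_mat (M*L) (W k)" "\<forall>j\<in>{1..J}. psd_mat (M*L) (V j)"
     "\<forall>k\<in>{1..K}. \<forall>X\<in>carrier_mat (M*L) (M*L). (\<lambda>n. rtr X (Ws (r n) k)) \<longlonglongrightarrow> rtr X (W k) \<and> (\<lambda>n. rtr (Ws (r n) k) X) \<longlonglongrightarrow> rtr (W k) X"
     "\<forall>j\<in>{1..J}. \<forall>X\<in>carrier_mat (M*L) (M*L). (\<lambda>n. rtr X (Vs (r n) j)) \<longlonglongrightarrow> rtr X (V j) \<and> (\<lambda>n. rtr (Vs (r n) j) X) \<longlonglongrightarrow> rtr (V j) X"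
      using limit_exists[OF M1 psdW psdV pw2] by blast
    note SL = seq_limits[of K M L "\<lambda>n. Ws (r n)" W J "\<lambda>n. Vs (r n)" V h g, OF L(4) L(5) hc gc]
    have F0l: "F0 M L K J g eta Qmin C beta Rhat W V" using SL(4) F L(2,3) by blast
    have pwl: "\<forall>l\<in>{1..L}. power M L K J W V l \<le> E l"
    proof
      fix l assume l: "l \<in> {1..L}"
      have lim2: "(\<lambda>n. (1 + eps (r n)) * E l) \<longlonglongrightarrow> (1 + 0) * E l"
        by (intro tendsto_mult tendsto_add tendsto_const eps_lim L(1))
      have "power M L K J W V l \<le> (1 + 0) * E l"
        using LIMSEQ_le[OF spec[OF SL(1), of l] lim2] pw l by blast
      thus "power M L K J W V l \<le> E l" by simp
    qed
    have sg: "\<gamma> \<le> sinr K J h sigma2 W V k" if k: "k \<in> {1..K}" for k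
    proof -
      have numc: "(\<lambda>n. num (Ws (r n)) k) \<longlonglongrightarrow> num W k" using SL(2) k by (simp add: num_def)
      have denc: "(\<lambda>n. den (Ws (r n)) (Vs (r n)) k) \<longlonglongrightarrow> den W V k" using SL(3) k by (simp add: den_def)
      have qc: "(\<lambda>n. (1 / \<gamma>) * num (Ws (r n)) k - den (Ws (r n)) (Vs (r n)) k) \<longlonglongrightarrow> (1 / \<gamma>) * num W k - den W V k"
        by (intro tendsto_diff tendsto_mult tendsto_const numc denc)
      have "0 \<le> (1 / \<gamma>) * num W k - den W V k"
        using LIMSEQ_le_const[OF qc] cn k by blast
      hence "\<gamma> * den W V k \<le> num W k" using gam by (simp add: field_simps)
      moreover have dp: "den W V k > 0"
        using den_pos[OF hc k sig, of W J V] L(2,3) sig by (simp add: den_def)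
      ultimately have "\<gamma> \<le> num W k / den W V k" by (simp add: le_divide_eq)
      thus ?thesis by (simp add: sinr_def num_def den_def)
    qed
    have mn: "\<gamma> \<le> Min ((sinr K J h sigma2 W V) ` {1..K})" using finK sg by simp
    have "ereal \<gamma> \<le> ereal (Min ((sinr K J h sigma2 W V) ` {1..K}))" using mn by simp
    also have "\<dots> \<le> gamma_max M L K J h g sigma2 eta Qmin C E beta Rhat"
      unfolding gamma_max_def by (rule Sup_upper) (use F0l pwl in blast)
    finally show "ereal \<gamma> \<le> gamma_max M L K J h g sigma2 eta Qmin C E beta Rhat" .
  qed
qed

end
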